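(* For every finite set $\Omega$ with $|\Omega|\ge2$, every $0<\varepsilon<1/2$ and every integer $k\ge2$ there exists $n_0>0$ such that for all $n>n_0$ and all $\mu\in\mathcal P(\Omega^n)$: (i) if $\mu$ is $(\varepsilon/9)^3$-symmetric, then $D_\square(\mu,\bigotimes_{i=1}^n\mu_i)<\varepsilon$; (ii) if $D_\square(\mu,\bigotimes_{i=1}^n\mu_i)<\varepsilon^4/(128|\Omega|)^{4k}$, then $\sum_{1\le i_1<\dots<i_k\le n}\|\mu_{i_1,\dots,i_k}-\mu_{i_1}\otimes\dots\otimes\mu_{i_k}\|_{TV}<\varepsilon n^k$.
   Context: $\mathcal P(\mathcal X)$ denotes the set of probability measures on a finite set $\mathcal X$; $[n]=\{1,\dots,n\}$; $\|p-q\|_{TV}=\frac12\sum_x|p(x)-q(x)|$. For $\mu\in\mathcal P(\Omega^n)$ and $I\subset[n]$, $\mu_I$ is the joint marginal of the coordinates in $I$ (written $\mu_{i_1,\dots,i_k}$ for $I=\{i_1,\dots,i_k\}$, and $\mu_i$ for one coordinate). $\mu\in\mathcal P(\Omega^V)$ is $\varepsilon$-symmetric if $\frac1{|V|^2}\sum_{i,j\in V,\,i\ne j}\|\mu_{i,j}-\mu_i\otimes\mu_j\|_{TV}<\varepsilon$. For $\mu,\nu\in\mathcal P(\Omega^n)$ let $\Gamma(\mu,\nu)$ be the set of couplings, i.e. probability measures $\gamma$ on $\Omega^n\times\Omega^n$ whose first and second marginals are $\mu$ and $\nu$. The cut metric is $D_\square(\mu,\nu)=\frac1n\min_{\gamma\in\Gamma(\mu,\nu)}\max_{I\subset[n],\,B\subset\Omega^n\times\Omega^n,\,\omega\in\Omega}\Big|\sum_{i\in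 I}\sum_{(\sigma,\tau)\in B}\gamma(\sigma,\tau)\big(\mathbf 1\{\sigma_i=\omega\}-\mathbf 1\{\tau_i=\omega\}\big)\Big|$. *)

theory Defs
  imports Complex_Main "HOL-Library.FuncSet"
begin

text \<open>Configurations in \<Omega>^n, with \<Omega> = UNIV of a finite type and coordinates [n] = {1..n},
  represented as extensional functions on {1..n}.\<close>
definition cfgs :: "nat \<Rightarrow> (nat \<Rightarrow> 'a) set" where
  "cfgs n = PiE {1..n} (\<lambda>_. UNIV)"

definition is_prob :: "nat \<Rightarrow> ((nat \<Rightarrow> 'a) \<Rightarrow> real) \<Rightarrow> bool" where
  "is_prob n \<mu> \<longleftrightarrow> (\<forall>\<sigma>. 0 \<le> \<mu> \<sigma>) \<and> (\<forall>\<sigma>. \<sigma> \<notin> cfgs n \<longrightarrow> \<mu> \<sigma> = 0)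
     \<and> sum \<mu> (cfgs n) = 1"

definition marg :: "nat \<Rightarrow> ((nat \<Rightarrow> 'a) \<Rightarrow> real) \<Rightarrow> nat set \<Rightarrow> (nat \<Rightarrow> 'a) \<Rightarrow> real" where
  "marg n \<mu> I \<tau> = (\<Sum>\<sigma>\<in>cfgs n. if restrict \<sigma> I = \<tau> then \<mu> \<sigma> else 0)"

definition marg1 :: "nat \<Rightarrow> ((nat \<Rightarrow> 'a) \<Rightarrow> real) \<Rightarrow> nat \<Rightarrow> 'a \<Rightarrow> real" where
  "marg1 n \<mu> i \<omega> = (\<Sum>\<sigma>\<in>cfgs n. if \<sigma> i = \<omega> then \<mu> \<sigma> else 0)"

definition tv_marg :: "nat \<Rightarrow> ((nat \<Rightarrow> 'a) \<Rightarrow> real) \<Rightarrow> nat set \<Rightarrow> real" where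
  "tv_marg n \<mu> I = (1/2) * (\<Sum>\<tau>\<in>PiE I (\<lambda>_. UNIV).
      \<bar>marg n \<mu> I \<tau> - (\<Prod>i\<in>I. marg1 n \<mu> i (\<tau> i))\<bar>)"

definition eps_symmetric :: "nat \<Rightarrow> real \<Rightarrow> ((nat \<Rightarrow> 'a) \<Rightarrow> real) \<Rightarrow> bool" where
  "eps_symmetric n \<epsilon> \<mu> \<longleftrightarrow>
     (1 / (real n)^2) * (\<Sum>i\<in>{1..n}. \<Sum>j\<in>{1..n}-{i}. tv_marg n \<mu> {i, j}) < \<epsilon>"

definition prod_marg :: "nat \<Rightarrow> ((nat \<Rightarrow> 'a) \<Rightarrow> real) \<Rightarrow> (nat \<Rightarrow> 'a) \<Rightarrow> real" where
  "prod_marg n \<mu> \<sigma> = (if \<sigma> \<in> cfgs n then (\<Prod>i\<in>{1..n}. marg1 n \<mu> i (\<sigma> i)) else 0)"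

definition couplings :: "nat \<Rightarrow> ((nat \<Rightarrow> 'a) \<Rightarrow> real) \<Rightarrow> ((nat \<Rightarrow> 'a) \<Rightarrow> real)
     \<Rightarrow> ((nat \<Rightarrow> 'a) \<times> (nat \<Rightarrow> 'a) \<Rightarrow> real) set" where
  "couplings n \<mu> \<nu> = {\<gamma>. (\<forall>p. 0 \<le> \<gamma> p) \<and> (\<forall>p. p \<notin> cfgs n \<times> cfgs n \<longrightarrow> \<gamma> p = 0)
      \<and> (\<forall>\<sigma>\<in>cfgs n. (\<Sum>\<tau>\<in>cfgs n. \<gamma> (\<sigma>, \<tau>)) = \<mu> \<sigma>)
      \<and> (\<forall>\<tau>\<in>cfgs n. (\<Sum>\<sigma>\<in>cfgs n. \<gamma> (\<sigma>, \<tau>)) = \<nu> \<tau>)}"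

definition cut_val :: "nat \<Rightarrow> ((nat \<Rightarrow> 'a::finite) \<times> (nat \<Rightarrow> 'a) \<Rightarrow> real) \<Rightarrow> real" where
  "cut_val n \<gamma> = Max {\<bar>\<Sum>i\<in>I. \<Sum>p\<in>B. \<gamma> p *
        ((if fst p i = \<omega> then 1 else 0) - (if snd p i = \<omega> then 1 else 0))\<bar>
      | I B \<omega>. I \<subseteq> {1..n} \<and> B \<subseteq> cfgs n \<times> cfgs n}"

text \<open>Cut metric; the minimum over couplings is attained (compactness), so it equals the infimum.\<close>
definition cut_dist :: "nat \<Rightarrow> ((nat \<Rightarrow> 'a::finite) \<Rightarrow> real) \<Rightarrow> ((nat \<Rightarrow> 'a) \<Rightarrow> real) \<Rightarrow> real" where
  "cut_dist n \<mu> \<nu> = (1 / real n) * Inf (cut_val n ` couplings n \<mu> \<nu>)"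

end

theory Submission
  imports Defs
begin


lemma finite_cfgs[simp]: "finite (cfgs n :: (nat \<Rightarrow> 'a::finite) set)"
  unfolding cfgs_def by (rule finite_PiE) auto

lemma cfgs_mem: "\<sigma> \<in> cfgs n \<Longrightarrow> i \<notin> {1..n} \<Longrightarrow> \<sigma> i = undefined"
  unfolding cfgs_def by (rule PiE_arb)

lemma restrict_eq_iff: assumes x: "x \<in> PiE J (\<lambda>_. UNIV)" shows "(restrict \<sigma> J = x) = (\<forall>i\<in>J. \<sigma> i = x i)"
proof
  show "restrict \<sigma> J = x \<Longrightarrow> \<forall>i\<in>J. \<sigma> i = x i" by auto
  assume h: "\<forall>i\<in>J. \<sigma> i = x i"
  show "restrict \<sigma> J = x"
  proof (rule ext)
    fix i
    show "restrict \<sigma> J i = x i"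
      using h PiE_arb[OF x, of i] by (cases "i \<in> J") auto
  qed
qed

lemma marg_eq: "x \<in> PiE J (\<lambda>_. UNIV) \<Longrightarrow>
   marg n \<mu> J x = (\<Sum>\<sigma>\<in>cfgs n. if (\<forall>i\<in>J. \<sigma> i = x i) then \<mu> \<sigma> else 0)"
  unfolding marg_def by (simp add: restrict_eq_iff)

context
  fixes n :: nat and \<mu> :: "(nat \<Rightarrow> 'a::finite) \<Rightarrow> real"
  assumes P: "is_prob n \<mu>"
begin

lemma mu_nonneg: "0 \<le> \<mu> \<sigma>" using P unfolding is_prob_def by auto
lemma mu_sum: "sum \<mu> (cfgs n) = 1" using P unfolding is_prob_def by auto

lemma m_nonneg: "0 \<le> marg1 n \<mu> i \<omega>"
  unfolding marg1_def by (auto intro!: sum_nonneg simp: mu_nonneg)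

lemma m_sum: "(\<Sum>\<omega>\<in>UNIV. marg1 n \<mu> i \<omega>) = 1"
proof -
  have "(\<Sum>\<omega>\<in>UNIV. marg1 n \<mu> i \<omega>) = (\<Sum>\<sigma>\<in>cfgs n. \<Sum>\<omega>\<in>UNIV. if \<sigma> i = \<omega> then \<mu> \<sigma> else 0)"
    unfolding marg1_def by (rule sum.swap)
  also have "\<dots> = (\<Sum>\<sigma>\<in>cfgs n. \<mu> \<sigma>)" by simp
  finally show ?thesis using mu_sum by simp
qed

lemma prod_ev:
  assumes J: "J \<subseteq> {1..n}"
  shows "(\<Sum>\<sigma>\<in>cfgs n. if (\<forall>i\<in>J. \<sigma> i = x i) then prod_marg n \<mu> \<sigma> else 0)
     = (\<Prod>i\<in>J. marg1 n \<mu> i (x i))"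
proof -
  define g where "g i \<omega> = (if i \<in> J \<and> \<omega> \<noteq> x i then 0 else marg1 n \<mu> i \<omega>)" for i \<omega>
  have pt: "(if (\<forall>i\<in>J. \<sigma> i = x i) then prod_marg n \<mu> \<sigma> else 0) = (\<Prod>i\<in>{1..n}. g i (\<sigma> i))"
    if "\<sigma> \<in> cfgs n" for \<sigma>
  proof (cases "\<forall>i\<in>J. \<sigma> i = x i")
    case True
    then show ?thesis using that unfolding prod_marg_def g_def
      by (auto intro!: prod.cong)
  next
    case False
    then obtain i where "i \<in> J" "\<sigma> i \<noteq> x i" by auto
    then have "g i (\<sigma> i) = 0" "i \<in> {1..n}" using J unfolding g_def by auto
    then have pz: "(\<Prod>i\<in>{1..n}. g i (\<sigma> i)) = 0" by (intro prod_zero) auto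
    show ?thesis by (simp only: if_not_P[OF False] pz)
  qed
  have "(\<Sum>\<sigma>\<in>cfgs n. if (\<forall>i\<in>J. \<sigma> i = x i) then prod_marg n \<mu> \<sigma> else 0)
      = (\<Sum>\<sigma>\<in>cfgs n. \<Prod>i\<in>{1..n}. g i (\<sigma> i))" using pt by (rule sum.cong[OF refl])
  also have "\<dots> = (\<Prod>i\<in>{1..n}. \<Sum>\<omega>\<in>UNIV. g i \<omega>)"
    unfolding cfgs_def by (rule prod_sum_PiE[symmetric]) auto
  also have "\<dots> = (\<Prod>i\<in>{1..n}. if i \<in> J then marg1 n \<mu> i (x i) else 1)"
  proof (rule prod.cong[OF refl])
    fix i assume "i \<in> {1..n}"
    show "(\<Sum>\<omega>\<in>UNIV. g i \<omega>) = (if i \<in> J then marg1 n \<mu> i (x i) else 1)"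
    proof (cases "i \<in> J")
      case True
      have "(\<Sum>\<omega>\<in>UNIV. g i \<omega>) = (\<Sum>\<omega>\<in>UNIV. if \<omega> = x i then marg1 n \<mu> i \<omega> else 0)"
        unfolding g_def using True by (intro sum.cong) auto
      then show ?thesis using True by simp
    next
      case False
      then show ?thesis unfolding g_def using m_sum by simp
    qed
  qed
  also have "\<dots> = (\<Prod>i\<in>J. marg1 n \<mu> i (x i))"
    using J by (simp add: prod.If_cases Int_absorb1)
  finally show ?thesis .
qed

lemma nu_sum: "sum (prod_marg n \<mu>) (cfgs n) = 1"
  using prod_ev[of "{}"] by simp

lemma nu_nonneg: "0 \<le> prod_marg n \<mu> \<sigma>"
  unfolding prod_marg_def by (auto intro!: prod_nonneg simp: m_nonneg)

lemma nu_prob: "is_prob n (prod_marg n \<mu>)"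
  unfolding is_prob_def using nu_sum nu_nonneg by (auto simp: prod_marg_def)

end


definition ct :: "((nat \<Rightarrow> 'a) \<times> (nat \<Rightarrow> 'a) \<Rightarrow> real) \<Rightarrow> nat set \<Rightarrow> ((nat \<Rightarrow> 'a) \<times> (nat \<Rightarrow> 'a)) set \<Rightarrow> 'a \<Rightarrow> real" where
  "ct \<gamma> I B \<omega> = \<bar>\<Sum>i\<in>I. \<Sum>p\<in>B. \<gamma> p *
        ((if fst p i = \<omega> then 1 else 0) - (if snd p i = \<omega> then 1 else 0))\<bar>"

lemma cut_val_ct:
  fixes \<gamma> :: "(nat \<Rightarrow> 'a::finite) \<times> (nat \<Rightarrow> 'a) \<Rightarrow> real"
  shows "cut_val n \<gamma> = Max {ct \<gamma> I B \<omega> | I B \<omega>. I \<subseteq> {1..n} \<and> B \<subseteq> cfgs n \<times> cfgs n}"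
  unfolding cut_val_def ct_def by simp

lemma cut_set_fin:
  fixes \<gamma> :: "(nat \<Rightarrow> 'a::finite) \<times> (nat \<Rightarrow> 'a) \<Rightarrow> real"
  shows "finite {ct \<gamma> I B \<omega> | I B \<omega>. I \<subseteq> {1..n} \<and> B \<subseteq> cfgs n \<times> cfgs n}"
  (is "finite ?S")
proof (rule finite_subset)
  show "?S \<subseteq> (\<lambda>(I,B,\<omega>). ct \<gamma> I B \<omega>) ` (Pow {1..n} \<times> Pow (cfgs n \<times> cfgs n) \<times> (UNIV::'a::finite set))"
  proof (rule subsetI)
    fix v assume "v \<in> ?S"
    then obtain I B \<omega> where "v = ct \<gamma> I B \<omega>" "I \<subseteq> {1..n}" "B \<subseteq> cfgs n \<times> cfgs n" by blast
    then show "v \<in> (\<lambda>(I,B,\<omega>). ct \<gamma> I B \<omega>) ` (Pow {1..n} \<times> Pow (cfgs n \<times> cfgs n) \<times> (UNIV::'a::finite set))"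
      by (intro image_eqI[of _ _ "(I,B,\<omega>)"]) auto
  qed
qed auto

lemma cut_le:
  fixes \<gamma> :: "(nat \<Rightarrow> 'a::finite) \<times> (nat \<Rightarrow> 'a) \<Rightarrow> real"
  assumes "I \<subseteq> {1..n}" "B \<subseteq> cfgs n \<times> cfgs n"
  shows "\<bar>\<Sum>i\<in>I. \<Sum>p\<in>B. \<gamma> p *
        ((if fst p i = \<omega> then 1 else 0) - (if snd p i = \<omega> then 1 else 0))\<bar> \<le> cut_val n \<gamma>"
proof -
  have "ct \<gamma> I B \<omega> \<le> cut_val n \<gamma>"
    unfolding cut_val_ct by (rule Max_ge[OF cut_set_fin]) (use assms in blast)
  then show ?thesis unfolding ct_def .
qed

lemma cut_val_le:
  fixes \<gamma> :: "(nat \<Rightarrow> 'a::finite) \<times> (nat \<Rightarrow> 'a) \<Rightarrow> real"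
  assumes "\<And>I B \<omega>. I \<subseteq> {1..n} \<Longrightarrow> B \<subseteq> cfgs n \<times> cfgs n \<Longrightarrow> \<bar>\<Sum>i\<in>I. \<Sum>p\<in>B. \<gamma> p *
        ((if fst p i = \<omega> then 1 else 0) - (if snd p i = \<omega> then 1 else 0))\<bar> \<le> M"
  shows "cut_val n \<gamma> \<le> M"
  unfolding cut_val_ct
proof (subst Max_le_iff[OF cut_set_fin])
  show "{ct \<gamma> I B \<omega> |I B \<omega>. I \<subseteq> {1..n} \<and> B \<subseteq> cfgs n \<times> cfgs n} \<noteq> {}" by blast
  show "\<forall>a\<in>{ct \<gamma> I B \<omega> |I B \<omega>. I \<subseteq> {1..n} \<and> B \<subseteq> cfgs n \<times> cfgs n}. a \<le> M"
    using assms unfolding ct_def by blast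
qed

lemma cut_val_nonneg:
  fixes \<gamma> :: "(nat \<Rightarrow> 'a::finite) \<times> (nat \<Rightarrow> 'a) \<Rightarrow> real"
  shows "0 \<le> cut_val n \<gamma>"
  using cut_le[of "{}" n "{}" \<gamma>] by simp

lemma cut_dist_le:
  fixes \<gamma> :: "(nat \<Rightarrow> 'a::finite) \<times> (nat \<Rightarrow> 'a) \<Rightarrow> real"
  assumes "\<gamma> \<in> couplings n \<mu> \<nu>"
  shows "cut_dist n \<mu> \<nu> \<le> cut_val n \<gamma> / real n"
proof -
  have "bdd_below (cut_val n ` couplings n \<mu> \<nu>)"
    by (rule bdd_belowI[of _ 0]) (auto intro: cut_val_nonneg)
  then have "Inf (cut_val n ` couplings n \<mu> \<nu>) \<le> cut_val n \<gamma>"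
    by (rule cInf_lower[rotated]) (use assms in auto)
  then show ?thesis unfolding cut_dist_def
    by (simp add: divide_right_mono)
qed

lemma cut_dist_lt:
  fixes \<mu> \<nu> :: "(nat \<Rightarrow> 'a::finite) \<Rightarrow> real"
  assumes "couplings n \<mu> \<nu> \<noteq> {}" "cut_dist n \<mu> \<nu> < \<eta>" "n > 0"
  shows "\<exists>\<gamma>\<in>couplings n \<mu> \<nu>. cut_val n \<gamma> < \<eta> * real n"
proof -
  have "Inf (cut_val n ` couplings n \<mu> \<nu>) < \<eta> * real n"
    using assms(2,3) unfolding cut_dist_def by (simp add: field_simps)
  then obtain v where "v \<in> cut_val n ` couplings n \<mu> \<nu>" "v < \<eta> * real n"
    using cInf_lessD[of "cut_val n ` couplings n \<mu> \<nu>"] assms(1) by blast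
  then show ?thesis by blast
qed

lemma jensen_sq:
  fixes w a :: "'b \<Rightarrow> real"
  assumes "finite A" "\<And>x. x \<in> A \<Longrightarrow> 0 \<le> w x" "sum w A = 1"
  shows "(\<Sum>x\<in>A. w x * a x)^2 \<le> (\<Sum>x\<in>A. w x * (a x)^2)"
proof -
  define m where "m = (\<Sum>x\<in>A. w x * a x)"
  have "0 \<le> (\<Sum>x\<in>A. w x * (a x - m)^2)"
    using assms by (auto intro!: sum_nonneg)
  also have "\<dots> = (\<Sum>x\<in>A. w x * (a x)^2) - 2 * m * (\<Sum>x\<in>A. w x * a x) + m^2 * sum w A"
    by (simp add: power2_eq_square algebra_simps sum.distrib sum_subtractf sum_distrib_left)
  finally show ?thesis using assms(3) unfolding m_def by (simp add: power2_eq_square)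
qed

context
  fixes n :: nat and \<mu> :: "(nat \<Rightarrow> 'a::finite) \<Rightarrow> real"
  assumes P: "is_prob n \<mu>"
begin

lemma mu_out: "\<sigma> \<notin> cfgs n \<Longrightarrow> \<mu> \<sigma> = 0" using P unfolding is_prob_def by auto

definition "gam0 = (\<lambda>p. \<mu> (fst p) * prod_marg n \<mu> (snd p))"

lemma gam0_coupling: "gam0 \<in> couplings n \<mu> (prod_marg n \<mu>)"
  unfolding couplings_def gam0_def
proof (intro CollectI conjI allI impI ballI)
  fix p show "0 \<le> \<mu> (fst p) * prod_marg n \<mu> (snd p)"
    using mu_nonneg[OF P] nu_nonneg[OF P] by (rule mult_nonneg_nonneg)
next
  fix p :: "(nat \<Rightarrow> 'a) \<times> (nat \<Rightarrow> 'a)" assume "p \<notin> cfgs n \<times> cfgs n"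
  then show "\<mu> (fst p) * prod_marg n \<mu> (snd p) = 0"
    using mu_out by (cases p) (auto simp: prod_marg_def)
next
  fix \<sigma> :: "nat \<Rightarrow> 'a" assume "\<sigma> \<in> cfgs n"
  show "(\<Sum>\<tau>\<in>cfgs n. \<mu> (fst (\<sigma>, \<tau>)) * prod_marg n \<mu> (snd (\<sigma>, \<tau>))) = \<mu> \<sigma>"
    using nu_sum[OF P] by (simp add: sum_distrib_left[symmetric])
next
  fix \<tau> :: "nat \<Rightarrow> 'a" assume "\<tau> \<in> cfgs n"
  show "(\<Sum>\<sigma>\<in>cfgs n. \<mu> (fst (\<sigma>, \<tau>)) * prod_marg n \<mu> (snd (\<sigma>, \<tau>))) = prod_marg n \<mu> \<tau>"
    using mu_sum[OF P] by (simp add: sum_distrib_right[symmetric])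
qed

lemma couplings_ne: "couplings n \<mu> (prod_marg n \<mu>) \<noteq> {}"
  using gam0_coupling by blast

end


definition ee :: "nat \<Rightarrow> 'a \<Rightarrow> (nat \<Rightarrow> 'a) \<Rightarrow> real" where
  "ee i \<omega> \<sigma> = (if \<sigma> i = \<omega> then 1 else 0)"

definition XX :: "nat set \<Rightarrow> 'a \<Rightarrow> (nat \<Rightarrow> 'a) \<Rightarrow> real" where
  "XX I \<omega> \<sigma> = (\<Sum>i\<in>I. ee i \<omega> \<sigma>)"

lemma sq_expand:
  assumes "finite I"
  shows "(\<Sum>\<sigma>\<in>C. f \<sigma> * (XX I \<omega> \<sigma>)^2) = (\<Sum>i\<in>I. \<Sum>j\<in>I. \<Sum>\<sigma>\<in>C. f \<sigma> * (ee i \<omega> \<sigma> * ee j \<omega> \<sigma>))"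
proof -
  have "(\<Sum>\<sigma>\<in>C. f \<sigma> * (XX I \<omega> \<sigma>)^2) = (\<Sum>\<sigma>\<in>C. \<Sum>i\<in>I. \<Sum>j\<in>I. f \<sigma> * (ee i \<omega> \<sigma> * ee j \<omega> \<sigma>))"
  proof (rule sum.cong[OF refl])
    fix \<sigma>
    have "(XX I \<omega> \<sigma>)^2 = (\<Sum>i\<in>I. \<Sum>j\<in>I. ee i \<omega> \<sigma> * ee j \<omega> \<sigma>)"
      unfolding XX_def power2_eq_square by (rule sum_product)
    then show "f \<sigma> * (XX I \<omega> \<sigma>)^2 = (\<Sum>i\<in>I. \<Sum>j\<in>I. f \<sigma> * (ee i \<omega> \<sigma> * ee j \<omega> \<sigma>))"
      by (simp add: sum_distrib_left)
  qed
  also have "\<dots> = (\<Sum>i\<in>I. \<Sum>\<sigma>\<in>C. \<Sum>j\<in>I. f \<sigma> * (ee i \<omega> \<sigma> * ee j \<omega> \<sigma>))"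
    by (rule sum.swap)
  also have "\<dots> = (\<Sum>i\<in>I. \<Sum>j\<in>I. \<Sum>\<sigma>\<in>C. f \<sigma> * (ee i \<omega> \<sigma> * ee j \<omega> \<sigma>))"
    by (rule sum.cong[OF refl], rule sum.swap)
  finally show ?thesis .
qed

lemma lin_expand:
  shows "(\<Sum>\<sigma>\<in>C. f \<sigma> * XX I \<omega> \<sigma>) = (\<Sum>i\<in>I. \<Sum>\<sigma>\<in>C. f \<sigma> * ee i \<omega> \<sigma>)"
  unfolding XX_def sum_distrib_left by (rule sum.swap)

lemma ee_prod: "ee i \<omega> \<sigma> * ee j \<omega> \<sigma> = (if \<forall>l\<in>{i,j}. \<sigma> l = (\<lambda>_. \<omega>) l then 1 else 0)"
  unfolding ee_def by auto

lemma ee_one: "ee i \<omega> \<sigma> = (if \<forall>l\<in>{i}. \<sigma> l = (\<lambda>_. \<omega>) l then 1 else 0)"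
  unfolding ee_def by auto

context
  fixes n :: nat and \<mu> :: "(nat \<Rightarrow> 'a::finite) \<Rightarrow> real"
  assumes P: "is_prob n \<mu>"
begin

abbreviation "mm i \<omega> \<equiv> marg1 n \<mu> i \<omega>"
abbreviation "nu \<equiv> prod_marg n \<mu>"

lemma Qnu: "i \<in> {1..n} \<Longrightarrow> j \<in> {1..n} \<Longrightarrow>
  (\<Sum>\<sigma>\<in>cfgs n. nu \<sigma> * (ee i \<omega> \<sigma> * ee j \<omega> \<sigma>)) = (if i = j then mm i \<omega> else mm i \<omega> * mm j \<omega>)"
proof -
  assume ij: "i \<in> {1..n}" "j \<in> {1..n}"
  have "(\<Sum>\<sigma>\<in>cfgs n. nu \<sigma> * (ee i \<omega> \<sigma> * ee j \<omega> \<sigma>))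
      = (\<Sum>\<sigma>\<in>cfgs n. if \<forall>l\<in>{i,j}. \<sigma> l = (\<lambda>_. \<omega>) l then nu \<sigma> else 0)"
    unfolding ee_prod by (intro sum.cong) auto
  also have "\<dots> = (\<Prod>l\<in>{i,j}. mm l \<omega>)" using prod_ev[OF P, of "{i,j}" "\<lambda>_. \<omega>"] ij by simp
  finally show ?thesis by simp
qed

lemma Lnu: "i \<in> {1..n} \<Longrightarrow> (\<Sum>\<sigma>\<in>cfgs n. nu \<sigma> * ee i \<omega> \<sigma>) = mm i \<omega>"
proof -
  assume i: "i \<in> {1..n}"
  have "(\<Sum>\<sigma>\<in>cfgs n. nu \<sigma> * ee i \<omega> \<sigma>)
      = (\<Sum>\<sigma>\<in>cfgs n. if \<forall>l\<in>{i}. \<sigma> l = (\<lambda>_. \<omega>) l then nu \<sigma> else 0)"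
    unfolding ee_one by (intro sum.cong) auto
  also have "\<dots> = (\<Prod>l\<in>{i}. mm l \<omega>)" using prod_ev[OF P, of "{i}" "\<lambda>_. \<omega>"] i by simp
  finally show ?thesis by simp
qed

lemma Lmu: "(\<Sum>\<sigma>\<in>cfgs n. \<mu> \<sigma> * ee i \<omega> \<sigma>) = mm i \<omega>"
  unfolding marg1_def ee_def by (intro sum.cong) auto

lemma Qmu_diag: "(\<Sum>\<sigma>\<in>cfgs n. \<mu> \<sigma> * (ee i \<omega> \<sigma> * ee i \<omega> \<sigma>)) = mm i \<omega>"
  unfolding marg1_def ee_def by (intro sum.cong) auto

lemma tv_nonneg: "0 \<le> tv_marg n \<mu> J"
  unfolding tv_marg_def by (auto intro!: sum_nonneg)

lemma Qmu_off:
  assumes "i \<noteq> j"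
  shows "(\<Sum>\<sigma>\<in>cfgs n. \<mu> \<sigma> * (ee i \<omega> \<sigma> * ee j \<omega> \<sigma>)) - mm i \<omega> * mm j \<omega> \<le> 2 * tv_marg n \<mu> {i,j}"
proof -
  define x0 where "x0 = restrict (\<lambda>_. \<omega>) {i,j}"
  have x0: "x0 \<in> PiE {i,j} (\<lambda>_. UNIV)" unfolding x0_def by auto
  have "(\<Sum>\<sigma>\<in>cfgs n. \<mu> \<sigma> * (ee i \<omega> \<sigma> * ee j \<omega> \<sigma>)) = marg n \<mu> {i,j} x0"
    unfolding marg_eq[OF x0] by (intro sum.cong refl) (simp add: ee_def x0_def)
  moreover have "mm i \<omega> * mm j \<omega> = (\<Prod>l\<in>{i,j}. mm l (x0 l))"
    using assms unfolding x0_def by simp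
  moreover have "\<bar>marg n \<mu> {i,j} x0 - (\<Prod>l\<in>{i,j}. mm l (x0 l))\<bar>
     \<le> (\<Sum>\<tau>\<in>PiE {i,j} (\<lambda>_. UNIV). \<bar>marg n \<mu> {i,j} \<tau> - (\<Prod>l\<in>{i,j}. mm l (\<tau> l))\<bar>)"
    by (rule member_le_sum[OF x0]) (auto intro: finite_PiE)
  ultimately show ?thesis unfolding tv_marg_def by linarith
qed

lemma gam0_sum: "(\<Sum>p\<in>cfgs n \<times> cfgs n. gam0 n \<mu> p) = 1"
proof -
  have "(\<Sum>p\<in>cfgs n \<times> cfgs n. gam0 n \<mu> p) = (\<Sum>\<sigma>\<in>cfgs n. \<Sum>\<tau>\<in>cfgs n. \<mu> \<sigma> * nu \<tau>)"
    unfolding gam0_def[OF P] sum.cartesian_product by (simp add: case_prod_beta)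
  also have "\<dots> = 1" using mu_sum[OF P] nu_sum[OF P] by (simp add: sum_distrib_left[symmetric])
  finally show ?thesis .
qed

lemma gam0_nonneg: "0 \<le> gam0 n \<mu> p"
  unfolding gam0_def[OF P] using mu_nonneg[OF P] nu_nonneg[OF P] by (rule mult_nonneg_nonneg)

lemma var_expand:
  "(\<Sum>p\<in>cfgs n \<times> cfgs n. gam0 n \<mu> p * (XX I \<omega> (fst p) - XX I \<omega> (snd p))^2)
   = (\<Sum>\<sigma>\<in>cfgs n. \<mu> \<sigma> * (XX I \<omega> \<sigma>)^2) + (\<Sum>\<tau>\<in>cfgs n. nu \<tau> * (XX I \<omega> \<tau>)^2)
     - 2 * (\<Sum>\<sigma>\<in>cfgs n. \<mu> \<sigma> * XX I \<omega> \<sigma>) * (\<Sum>\<tau>\<in>cfgs n. nu \<tau> * XX I \<omega> \<tau>)"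
proof -
  let ?X = "XX I \<omega>"
  have "(\<Sum>p\<in>cfgs n \<times> cfgs n. gam0 n \<mu> p * (?X (fst p) - ?X (snd p))^2)
     = (\<Sum>\<sigma>\<in>cfgs n. \<Sum>\<tau>\<in>cfgs n. \<mu> \<sigma> * nu \<tau> * (?X \<sigma> - ?X \<tau>)^2)"
    unfolding gam0_def[OF P] sum.cartesian_product by (simp add: case_prod_beta)
  also have "\<dots> = (\<Sum>\<sigma>\<in>cfgs n. \<mu> \<sigma> * (?X \<sigma>)^2 * (\<Sum>\<tau>\<in>cfgs n. nu \<tau>)
        + \<mu> \<sigma> * (\<Sum>\<tau>\<in>cfgs n. nu \<tau> * (?X \<tau>)^2) - 2 * (\<mu> \<sigma> * ?X \<sigma>) * (\<Sum>\<tau>\<in>cfgs n. nu \<tau> * ?X \<tau>))"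
  proof (rule sum.cong[OF refl])
    fix \<sigma>
    have "(\<Sum>\<tau>\<in>cfgs n. \<mu> \<sigma> * nu \<tau> * (?X \<sigma> - ?X \<tau>)^2)
       = (\<Sum>\<tau>\<in>cfgs n. \<mu> \<sigma> * (?X \<sigma>)^2 * nu \<tau> + \<mu> \<sigma> * (nu \<tau> * (?X \<tau>)^2) - 2 * (\<mu> \<sigma> * ?X \<sigma>) * (nu \<tau> * ?X \<tau>))"
      by (intro sum.cong) (auto simp: power2_eq_square algebra_simps)
    also have "\<dots> = \<mu> \<sigma> * (?X \<sigma>)^2 * (\<Sum>\<tau>\<in>cfgs n. nu \<tau>)
        + \<mu> \<sigma> * (\<Sum>\<tau>\<in>cfgs n. nu \<tau> * (?X \<tau>)^2) - 2 * (\<mu> \<sigma> * ?X \<sigma>) * (\<Sum>\<tau>\<in>cfgs n. nu \<tau> * ?X \<tau>)"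
      by (simp add: sum.distrib sum_subtractf sum_distrib_left)
    finally show "(\<Sum>\<tau>\<in>cfgs n. \<mu> \<sigma> * nu \<tau> * (?X \<sigma> - ?X \<tau>)^2) = \<dots>" .
  qed
  also have "\<dots> = (\<Sum>\<sigma>\<in>cfgs n. \<mu> \<sigma> * (?X \<sigma>)^2) * (\<Sum>\<tau>\<in>cfgs n. nu \<tau>) + (\<Sum>\<sigma>\<in>cfgs n. \<mu> \<sigma>) * (\<Sum>\<tau>\<in>cfgs n. nu \<tau> * (?X \<tau>)^2)
     - 2 * (\<Sum>\<sigma>\<in>cfgs n. \<mu> \<sigma> * ?X \<sigma>) * (\<Sum>\<tau>\<in>cfgs n. nu \<tau> * ?X \<tau>)"
    by (simp only: sum_subtractf sum.distrib sum_distrib_right[symmetric] sum_distrib_left[symmetric])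
  finally show ?thesis using mu_sum[OF P] nu_sum[OF P] by simp
qed

definition "SS = (\<Sum>i\<in>{1..n}. \<Sum>j\<in>{1..n}-{i}. tv_marg n \<mu> {i, j})"

lemma var_bound:
  assumes I: "I \<subseteq> {1..n}"
  shows "(\<Sum>p\<in>cfgs n \<times> cfgs n. gam0 n \<mu> p * (XX I \<omega> (fst p) - XX I \<omega> (snd p))^2) \<le> 2 * real n + 2 * SS"
proof -
  have fI: "finite I" using I finite_subset by blast
  define Qm where "Qm i j = (\<Sum>\<sigma>\<in>cfgs n. \<mu> \<sigma> * (ee i \<omega> \<sigma> * ee j \<omega> \<sigma>))" for i j
  define Qn where "Qn i j = (\<Sum>\<sigma>\<in>cfgs n. nu \<sigma> * (ee i \<omega> \<sigma> * ee j \<omega> \<sigma>))" for i j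
  define g where "g i j = Qm i j + Qn i j - 2 * (mm i \<omega> * mm j \<omega>)" for i j
  have E1: "(\<Sum>\<sigma>\<in>cfgs n. \<mu> \<sigma> * XX I \<omega> \<sigma>) = (\<Sum>i\<in>I. mm i \<omega>)"
    unfolding lin_expand Lmu ..
  have E2: "(\<Sum>\<sigma>\<in>cfgs n. nu \<sigma> * XX I \<omega> \<sigma>) = (\<Sum>i\<in>I. mm i \<omega>)"
    unfolding lin_expand using I by (intro sum.cong) (auto simp: Lnu)
  have sq: "(\<Sum>i\<in>I. mm i \<omega>) * (\<Sum>i\<in>I. mm i \<omega>) = (\<Sum>i\<in>I. \<Sum>j\<in>I. mm i \<omega> * mm j \<omega>)"
    by (simp add: sum_product)
  have "(\<Sum>p\<in>cfgs n \<times> cfgs n. gam0 n \<mu> p * (XX I \<omega> (fst p) - XX I \<omega> (snd p))^2)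
      = (\<Sum>i\<in>I. \<Sum>j\<in>I. Qm i j) + (\<Sum>i\<in>I. \<Sum>j\<in>I. Qn i j) - 2 * (\<Sum>i\<in>I. \<Sum>j\<in>I. mm i \<omega> * mm j \<omega>)"
    unfolding var_expand sq_expand[OF fI] E1 E2 Qm_def Qn_def sq[symmetric] by simp
  also have "\<dots> = (\<Sum>i\<in>I. \<Sum>j\<in>I. g i j)"
    unfolding g_def by (simp add: sum.distrib sum_subtractf sum_distrib_left)
  also have "\<dots> \<le> (\<Sum>i\<in>I. 2 + (\<Sum>j\<in>{1..n}-{i}. 2 * tv_marg n \<mu> {i,j}))"
  proof (rule sum_mono)
    fix i assume iI: "i \<in> I"
    then have i: "i \<in> {1..n}" using I by auto
    have gi: "g i i \<le> 2"
    proof -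
      have "g i i = 2 * mm i \<omega> - 2 * (mm i \<omega> * mm i \<omega>)"
        unfolding g_def Qm_def Qn_def Qmu_diag Qnu[OF i i] by simp
      moreover have "mm i \<omega> - mm i \<omega> * mm i \<omega> \<le> 1"
      proof -
        have "0 \<le> (mm i \<omega> - 1/2) * (mm i \<omega> - 1/2)" by simp
        moreover have "(mm i \<omega> - 1/2) * (mm i \<omega> - 1/2) = mm i \<omega> * mm i \<omega> - mm i \<omega> + 1/4"
          by (simp add: algebra_simps)
        ultimately show ?thesis by linarith
      qed
      ultimately show ?thesis by linarith
    qed
    have gj: "g i j \<le> 2 * tv_marg n \<mu> {i,j}" if "j \<in> I - {i}" for j
    proof -
      have j: "j \<in> {1..n}" "i \<noteq> j" using that I by auto
      have "g i j = Qm i j - mm i \<omega> * mm j \<omega>"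
        unfolding g_def Qn_def Qnu[OF i j(1)] using j by simp
      then show ?thesis unfolding Qm_def using Qmu_off[OF j(2)] by simp
    qed
    have "(\<Sum>j\<in>I. g i j) = g i i + (\<Sum>j\<in>I-{i}. g i j)"
      using fI iI by (simp add: sum.remove)
    also have "\<dots> \<le> 2 + (\<Sum>j\<in>I-{i}. 2 * tv_marg n \<mu> {i,j})"
      using gi gj by (intro add_mono sum_mono) auto
    also have "\<dots> \<le> 2 + (\<Sum>j\<in>{1..n}-{i}. 2 * tv_marg n \<mu> {i,j})"
      using I by (intro add_left_mono sum_mono2) (auto simp: tv_nonneg)
    finally show "(\<Sum>j\<in>I. g i j) \<le> 2 + (\<Sum>j\<in>{1..n}-{i}. 2 * tv_marg n \<mu> {i,j})" .
  qed
  also have "\<dots> \<le> (\<Sum>i\<in>{1..n}. 2 + (\<Sum>j\<in>{1..n}-{i}. 2 * tv_marg n \<mu> {i,j}))"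
    using I by (intro sum_mono2) (auto intro!: add_nonneg_nonneg sum_nonneg simp: tv_nonneg)
  also have "\<dots> = 2 * real n + 2 * SS"
    unfolding SS_def by (simp add: sum.distrib sum_distrib_left)
  finally show ?thesis .
qed

lemma cut_gam0: "cut_val n (gam0 n \<mu>) \<le> sqrt (2 * real n + 2 * SS)"
proof (rule cut_val_le)
  fix I and B :: "((nat \<Rightarrow> 'a) \<times> (nat \<Rightarrow> 'a)) set" and \<omega> :: 'a
  assume I: "I \<subseteq> {1..n}" and B: "B \<subseteq> cfgs n \<times> cfgs n"
  let ?g = "gam0 n \<mu>"
  let ?Z = "\<lambda>p. XX I \<omega> (fst p) - XX I \<omega> (snd p)"
  have "(\<Sum>i\<in>I. \<Sum>p\<in>B. ?g p * ((if fst p i = \<omega> then 1 else 0) - (if snd p i = \<omega> then 1 else 0)))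
      = (\<Sum>p\<in>B. \<Sum>i\<in>I. ?g p * (ee i \<omega> (fst p) - ee i \<omega> (snd p)))"
    unfolding ee_def by (rule sum.swap)
  also have "\<dots> = (\<Sum>p\<in>B. ?g p * ?Z p)"
    unfolding XX_def by (intro sum.cong refl) (simp only: sum_distrib_left[symmetric] sum_subtractf)
  finally have eq: "(\<Sum>i\<in>I. \<Sum>p\<in>B. ?g p * ((if fst p i = \<omega> then 1 else 0) - (if snd p i = \<omega> then 1 else 0)))
      = (\<Sum>p\<in>B. ?g p * ?Z p)" .
  have "\<bar>\<Sum>p\<in>B. ?g p * ?Z p\<bar> \<le> (\<Sum>p\<in>B. ?g p * \<bar>?Z p\<bar>)"
    by (rule order_trans[OF sum_abs]) (simp add: abs_mult gam0_nonneg)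
  also have "\<dots> \<le> (\<Sum>p\<in>cfgs n \<times> cfgs n. ?g p * \<bar>?Z p\<bar>)"
    using B by (intro sum_mono2) (auto simp: gam0_nonneg)
  finally have h1: "\<bar>\<Sum>p\<in>B. ?g p * ?Z p\<bar> \<le> (\<Sum>p\<in>cfgs n \<times> cfgs n. ?g p * \<bar>?Z p\<bar>)" .
  have h2: "(\<Sum>p\<in>cfgs n \<times> cfgs n. ?g p * \<bar>?Z p\<bar>)^2 \<le> (\<Sum>p\<in>cfgs n \<times> cfgs n. ?g p * \<bar>?Z p\<bar>^2)"
    by (rule jensen_sq) (auto simp: gam0_nonneg gam0_sum)
  have h3: "(\<Sum>p\<in>cfgs n \<times> cfgs n. ?g p * \<bar>?Z p\<bar>^2) \<le> 2 * real n + 2 * SS"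
    using var_bound[OF I, of \<omega>] by simp
  have "(\<bar>\<Sum>p\<in>B. ?g p * ?Z p\<bar>)^2 \<le> (\<Sum>p\<in>cfgs n \<times> cfgs n. ?g p * \<bar>?Z p\<bar>)^2"
    using h1 by (intro power_mono) auto
  then have "(\<bar>\<Sum>p\<in>B. ?g p * ?Z p\<bar>)^2 \<le> 2 * real n + 2 * SS" using h2 h3 by linarith
  then show "\<bar>\<Sum>i\<in>I. \<Sum>p\<in>B. ?g p * ((if fst p i = \<omega> then 1 else 0) - (if snd p i = \<omega> then 1 else 0))\<bar>
      \<le> sqrt (2 * real n + 2 * SS)"
    unfolding eq by (rule real_le_rsqrt)
qed

end


definition Bs :: "nat \<Rightarrow> nat set \<Rightarrow> nat set \<Rightarrow> (nat \<Rightarrow> 'a) \<Rightarrow> ((nat \<Rightarrow> 'a) \<times> (nat \<Rightarrow> 'a)) set" where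
  "Bs n R T x = {p \<in> cfgs n \<times> cfgs n. (\<forall>i\<in>T. snd p i = x i) \<and> (\<forall>i\<in>R-T. fst p i = x i)}"

definition Dt :: "nat \<Rightarrow> ((nat \<Rightarrow> 'a) \<times> (nat \<Rightarrow> 'a) \<Rightarrow> real) \<Rightarrow> nat set \<Rightarrow> nat set \<Rightarrow> (nat \<Rightarrow> 'a) \<Rightarrow> 'a \<Rightarrow> nat \<Rightarrow> real" where
  "Dt n \<gamma> R T x \<omega> j = (\<Sum>p\<in>Bs n R T x. \<gamma> p * ((if fst p j = \<omega> then 1 else 0) - (if snd p j = \<omega> then 1 else 0)))"

definition HH :: "nat \<Rightarrow> ((nat \<Rightarrow> 'a) \<times> (nat \<Rightarrow> 'a) \<Rightarrow> real) \<Rightarrow> nat set \<Rightarrow> nat set \<Rightarrow> (nat \<Rightarrow> 'a) \<Rightarrow> real" where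
  "HH n \<gamma> J T x = (\<Sum>p\<in>cfgs n \<times> cfgs n. if (\<forall>i\<in>T. snd p i = x i) \<and> (\<forall>i\<in>J-T. fst p i = x i) then \<gamma> p else 0)"

lemma sum_if_const: "(\<Sum>x\<in>A. if P then f x else 0) = (if P then sum f A else (0::real))"
  by (cases P) simp_all

lemma L1:
  fixes \<gamma> :: "(nat \<Rightarrow> 'a::finite) \<times> (nat \<Rightarrow> 'a) \<Rightarrow> real"
  assumes S: "S \<subseteq> {1..n}"
  shows "(\<Sum>j\<in>S. \<bar>Dt n \<gamma> R T x \<omega> j\<bar>) \<le> 2 * cut_val n \<gamma>"
proof -
  let ?D = "Dt n \<gamma> R T x \<omega>"
  have fS: "finite S" using S finite_subset by blast
  have BB: "Bs n R T x \<subseteq> cfgs n \<times> cfgs n" unfolding Bs_def by auto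
  have a: "(\<Sum>j\<in>{j\<in>S. 0 \<le> ?D j}. ?D j) \<le> cut_val n \<gamma>"
    using cut_le[of "{j\<in>S. 0 \<le> ?D j}" n "Bs n R T x" \<gamma> \<omega>] S BB
    unfolding Dt_def by fastforce
  have b: "- (\<Sum>j\<in>{j\<in>S. \<not> 0 \<le> ?D j}. ?D j) \<le> cut_val n \<gamma>"
    using cut_le[of "{j\<in>S. \<not> 0 \<le> ?D j}" n "Bs n R T x" \<gamma> \<omega>] S BB
    unfolding Dt_def by fastforce
  have "(\<Sum>j\<in>S. \<bar>?D j\<bar>) = (\<Sum>j\<in>S. (if 0 \<le> ?D j then ?D j else 0) - (if \<not> 0 \<le> ?D j then ?D j else 0))"
    by (intro sum.cong) auto
  also have "\<dots> = (\<Sum>j\<in>{j\<in>S. 0 \<le> ?D j}. ?D j) - (\<Sum>j\<in>{j\<in>S. \<not> 0 \<le> ?D j}. ?D j)"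
    by (simp add: sum_subtractf sum.inter_filter[OF fS])
  finally show ?thesis using a b by linarith
qed

lemma Dt_cong:
  assumes "\<forall>i\<in>R. x i = y i" "T \<subseteq> R"
  shows "Dt n \<gamma> R T x = Dt n \<gamma> R T y"
proof -
  have "Bs n R T x = Bs n R T y" unfolding Bs_def using assms by auto
  then show ?thesis unfolding Dt_def by (intro ext) simp
qed

lemma sum_PiE_insert:
  fixes f :: "(nat \<Rightarrow> 'a::finite) \<Rightarrow> real"
  assumes "j \<notin> R"
  shows "(\<Sum>x\<in>PiE (insert j R) (\<lambda>_. UNIV). f x) = (\<Sum>y\<in>PiE R (\<lambda>_. UNIV). \<Sum>\<omega>\<in>UNIV. f (y(j := \<omega>)))"
proof -
  have inj: "inj_on (\<lambda>(\<omega>, g). g(j := \<omega>)) ((UNIV::'a set) \<times> PiE R (\<lambda>_. UNIV))"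
  proof (rule inj_onI, clarify)
    fix \<omega> g \<omega>' g' assume g: "g \<in> PiE R (\<lambda>_. UNIV)" and g': "g' \<in> PiE R (\<lambda>_. UNIV)"
      and eq: "g(j := \<omega>) = g'(j := \<omega>')"
    have "\<omega> = \<omega>'" using fun_cong[OF eq, of j] by simp
    moreover have "g = g'"
    proof
      fix i show "g i = g' i"
      proof (cases "i = j")
        case True then show ?thesis using PiE_arb[OF g, of i] PiE_arb[OF g', of i] assms by simp
      next
        case False then show ?thesis using fun_cong[OF eq, of i] by simp
      qed
    qed
    ultimately show "\<omega> = \<omega>' \<and> g = g'" by simp
  qed
  have "(\<Sum>x\<in>PiE (insert j R) (\<lambda>_. UNIV). f x) = (\<Sum>x\<in>(\<lambda>(\<omega>, g). g(j := \<omega>)) ` ((UNIV::'a set) \<times> PiE R (\<lambda>_. UNIV)). f x)"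
    by (simp add: PiE_insert_eq)
  also have "\<dots> = (\<Sum>(\<omega>, g)\<in>(UNIV::'a set) \<times> PiE R (\<lambda>_. UNIV). f (g(j := \<omega>)))"
    by (subst sum.reindex[OF inj]) (simp add: case_prod_beta)
  also have "\<dots> = (\<Sum>\<omega>\<in>UNIV. \<Sum>y\<in>PiE R (\<lambda>_. UNIV). f (y(j := \<omega>)))"
    by (simp add: sum.cartesian_product)
  also have "\<dots> = (\<Sum>y\<in>PiE R (\<lambda>_. UNIV). \<Sum>\<omega>\<in>UNIV. f (y(j := \<omega>)))"
    by (rule sum.swap)
  finally show ?thesis .
qed

lemma reindex_x:
  fixes \<gamma> :: "(nat \<Rightarrow> 'a::finite) \<times> (nat \<Rightarrow> 'a) \<Rightarrow> real"
  assumes "j \<notin> R" "T \<subseteq> R"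
  shows "(\<Sum>x\<in>PiE (insert j R) (\<lambda>_. UNIV). \<bar>Dt n \<gamma> R T x (x j) j\<bar>)
       = (\<Sum>y\<in>PiE R (\<lambda>_. UNIV). \<Sum>\<omega>\<in>UNIV. \<bar>Dt n \<gamma> R T y \<omega> j\<bar>)"
  unfolding sum_PiE_insert[OF assms(1)]
proof (intro sum.cong refl)
  fix y \<omega> show "\<bar>Dt n \<gamma> R T (y(j := \<omega>)) ((y(j := \<omega>)) j) j\<bar> = \<bar>Dt n \<gamma> R T y \<omega> j\<bar>"
    using Dt_cong[of R "y(j := \<omega>)" y T n \<gamma>] assms by auto
qed

context
  fixes n :: nat and \<mu> :: "(nat \<Rightarrow> 'a::finite) \<Rightarrow> real" and \<gamma>
  assumes P: "is_prob n \<mu>" and G: "\<gamma> \<in> couplings n \<mu> (prod_marg n \<mu>)"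
begin

lemma G_marg1: "\<sigma> \<in> cfgs n \<Longrightarrow> (\<Sum>\<tau>\<in>cfgs n. \<gamma> (\<sigma>, \<tau>)) = \<mu> \<sigma>"
  using G unfolding couplings_def by auto
lemma G_marg2: "\<tau> \<in> cfgs n \<Longrightarrow> (\<Sum>\<sigma>\<in>cfgs n. \<gamma> (\<sigma>, \<tau>)) = prod_marg n \<mu> \<tau>"
  using G unfolding couplings_def by auto

lemma HH_empty:
  assumes x: "x \<in> PiE J (\<lambda>_. UNIV)"
  shows "HH n \<gamma> J {} x = marg n \<mu> J x"
proof -
  have "HH n \<gamma> J {} x = (\<Sum>\<sigma>\<in>cfgs n. \<Sum>\<tau>\<in>cfgs n. if (\<forall>i\<in>J. \<sigma> i = x i) then \<gamma> (\<sigma>, \<tau>) else 0)"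
    unfolding HH_def sum.cartesian_product by (auto intro!: sum.cong)
  also have "\<dots> = (\<Sum>\<sigma>\<in>cfgs n. if (\<forall>i\<in>J. \<sigma> i = x i) then \<mu> \<sigma> else 0)"
    by (intro sum.cong refl) (simp add: sum_if_const G_marg1)
  finally show ?thesis using marg_eq[OF x] by simp
qed

lemma HH_full:
  assumes J: "J \<subseteq> {1..n}"
  shows "HH n \<gamma> J J x = (\<Prod>i\<in>J. marg1 n \<mu> i (x i))"
proof -
  have "HH n \<gamma> J J x = (\<Sum>\<sigma>\<in>cfgs n. \<Sum>\<tau>\<in>cfgs n. if (\<forall>i\<in>J. \<tau> i = x i) then \<gamma> (\<sigma>, \<tau>) else 0)"
    unfolding HH_def sum.cartesian_product by (auto intro!: sum.cong)
  also have "\<dots> = (\<Sum>\<tau>\<in>cfgs n. \<Sum>\<sigma>\<in>cfgs n. if (\<forall>i\<in>J. \<tau> i = x i) then \<gamma> (\<sigma>, \<tau>) else 0)"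
    by (rule sum.swap)
  also have "\<dots> = (\<Sum>\<tau>\<in>cfgs n. if (\<forall>i\<in>J. \<tau> i = x i) then prod_marg n \<mu> \<tau> else 0)"
    by (intro sum.cong refl) (simp add: sum_if_const G_marg2)
  finally show ?thesis using prod_ev[OF P J] by simp
qed

lemma HH_step:
  assumes j: "j \<in> J" and T: "T \<subseteq> J - {j}"
  shows "HH n \<gamma> J T x - HH n \<gamma> J (insert j T) x = Dt n \<gamma> (J - {j}) T x (x j) j"
proof -
  have "Dt n \<gamma> (J - {j}) T x (x j) j = (\<Sum>p\<in>cfgs n \<times> cfgs n.
     if (\<forall>i\<in>T. snd p i = x i) \<and> (\<forall>i\<in>(J-{j})-T. fst p i = x i)
     then \<gamma> p * ((if fst p j = x j then 1 else 0) - (if snd p j = x j then 1 else 0)) else 0)"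
    unfolding Dt_def Bs_def by (simp add: sum.inter_filter)
  also have "\<dots> = (\<Sum>p\<in>cfgs n \<times> cfgs n.
     (if (\<forall>i\<in>T. snd p i = x i) \<and> (\<forall>i\<in>J-T. fst p i = x i) then \<gamma> p else 0)
     - (if (\<forall>i\<in>insert j T. snd p i = x i) \<and> (\<forall>i\<in>J-insert j T. fst p i = x i) then \<gamma> p else 0))"
  proof (intro sum.cong refl)
    fix p :: "(nat \<Rightarrow> 'a) \<times> (nat \<Rightarrow> 'a)"
    have e1: "(\<forall>i\<in>J-T. fst p i = x i) = ((\<forall>i\<in>(J-{j})-T. fst p i = x i) \<and> fst p j = x j)"
      using j T by auto
    have e2: "(\<forall>i\<in>insert j T. snd p i = x i) = ((\<forall>i\<in>T. snd p i = x i) \<and> snd p j = x j)"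
      by auto
    have e3: "J - insert j T = (J-{j})-T" by auto
    show "(if (\<forall>i\<in>T. snd p i = x i) \<and> (\<forall>i\<in>(J-{j})-T. fst p i = x i)
     then \<gamma> p * ((if fst p j = x j then 1 else 0) - (if snd p j = x j then 1 else 0)) else 0) =
     (if (\<forall>i\<in>T. snd p i = x i) \<and> (\<forall>i\<in>J-T. fst p i = x i) then \<gamma> p else 0)
     - (if (\<forall>i\<in>insert j T. snd p i = x i) \<and> (\<forall>i\<in>J-insert j T. fst p i = x i) then \<gamma> p else 0)"
      unfolding e1 e2 e3 by auto
  qed
  also have "\<dots> = HH n \<gamma> J T x - HH n \<gamma> J (insert j T) x"
    unfolding HH_def by (simp add: sum_subtractf)
  finally show ?thesis by simp
qed

lemma chain:
  assumes fJ: "finite J" and S: "S \<subseteq> J"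
  shows "\<bar>HH n \<gamma> J {} x - HH n \<gamma> J S x\<bar> \<le>
    (\<Sum>j\<in>S. \<Sum>T\<in>Pow (J - {j}). \<bar>Dt n \<gamma> (J - {j}) T x (x j) j\<bar>)"
  using finite_subset[OF S fJ] S
proof (induction S rule: finite_induct)
  case empty then show ?case by simp
next
  case (insert a F)
  have aJ: "a \<in> J" and FJ: "F \<subseteq> J - {a}" using insert by auto
  have "\<bar>HH n \<gamma> J {} x - HH n \<gamma> J (insert a F) x\<bar>
      \<le> \<bar>HH n \<gamma> J {} x - HH n \<gamma> J F x\<bar> + \<bar>HH n \<gamma> J F x - HH n \<gamma> J (insert a F) x\<bar>"
    by linarith
  also have "\<bar>HH n \<gamma> J F x - HH n \<gamma> J (insert a F) x\<bar> = \<bar>Dt n \<gamma> (J - {a}) F x (x a) a\<bar>"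
    using HH_step[OF aJ FJ] by simp
  also have "\<dots> \<le> (\<Sum>T\<in>Pow (J - {a}). \<bar>Dt n \<gamma> (J - {a}) T x (x a) a\<bar>)"
    by (rule member_le_sum) (use FJ fJ in auto)
  finally show ?case using insert by simp
qed

lemma tv_bound_J:
  assumes J: "J \<subseteq> {1..n}"
  shows "2 * tv_marg n \<mu> J \<le> (\<Sum>j\<in>J. \<Sum>T\<in>Pow (J - {j}). \<Sum>y\<in>PiE (J - {j}) (\<lambda>_. UNIV).
       \<Sum>\<omega>\<in>UNIV. \<bar>Dt n \<gamma> (J - {j}) T y \<omega> j\<bar>)"
proof -
  have fJ: "finite J" using J finite_subset by blast
  have "2 * tv_marg n \<mu> J = (\<Sum>x\<in>PiE J (\<lambda>_. UNIV). \<bar>marg n \<mu> J x - (\<Prod>i\<in>J. marg1 n \<mu> i (x i))\<bar>)"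
    unfolding tv_marg_def by simp
  also have "\<dots> = (\<Sum>x\<in>PiE J (\<lambda>_. UNIV). \<bar>HH n \<gamma> J {} x - HH n \<gamma> J J x\<bar>)"
    by (intro sum.cong refl) (simp add: HH_empty HH_full[OF J])
  also have "\<dots> \<le> (\<Sum>x\<in>PiE J (\<lambda>_. UNIV). \<Sum>j\<in>J. \<Sum>T\<in>Pow (J - {j}). \<bar>Dt n \<gamma> (J - {j}) T x (x j) j\<bar>)"
    by (intro sum_mono chain[OF fJ]) auto
  also have "\<dots> = (\<Sum>j\<in>J. \<Sum>x\<in>PiE J (\<lambda>_. UNIV). \<Sum>T\<in>Pow (J - {j}). \<bar>Dt n \<gamma> (J - {j}) T x (x j) j\<bar>)"
    by (rule sum.swap)
  also have "\<dots> = (\<Sum>j\<in>J. \<Sum>T\<in>Pow (J - {j}). \<Sum>x\<in>PiE J (\<lambda>_. UNIV). \<bar>Dt n \<gamma> (J - {j}) T x (x j) j\<bar>)"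
    by (intro sum.cong refl sum.swap)
  also have "\<dots> = (\<Sum>j\<in>J. \<Sum>T\<in>Pow (J - {j}). \<Sum>y\<in>PiE (J - {j}) (\<lambda>_. UNIV).
       \<Sum>\<omega>\<in>UNIV. \<bar>Dt n \<gamma> (J - {j}) T y \<omega> j\<bar>)"
  proof (rule sum.cong[OF refl], rule sum.cong[OF refl])
    fix j T assume jJ: "j \<in> J" and T: "T \<in> Pow (J - {j})"
    have "insert j (J - {j}) = J" using jJ by auto
    then show "(\<Sum>x\<in>PiE J (\<lambda>_. UNIV). \<bar>Dt n \<gamma> (J - {j}) T x (x j) j\<bar>) =
       (\<Sum>y\<in>PiE (J - {j}) (\<lambda>_. UNIV). \<Sum>\<omega>\<in>UNIV. \<bar>Dt n \<gamma> (J - {j}) T y \<omega> j\<bar>)"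
      using reindex_x[of j "J - {j}" T n \<gamma>] T by simp
  qed
  finally show ?thesis .
qed

definition "FF R j = (\<Sum>T\<in>Pow R. \<Sum>y\<in>PiE R (\<lambda>_. UNIV). \<Sum>\<omega>\<in>(UNIV::'a set). \<bar>Dt n \<gamma> R T y \<omega> j\<bar>)"

lemma FF_sum:
  assumes R: "R \<subseteq> {1..n}"
  shows "(\<Sum>j\<in>{1..n} - R. FF R j) \<le> 2 ^ card R * real (card (UNIV::'a set)) ^ card R
          * real (card (UNIV::'a set)) * (2 * cut_val n \<gamma>)"
proof -
  have fR: "finite R" using R finite_subset by blast
  have "(\<Sum>j\<in>{1..n} - R. FF R j) = (\<Sum>T\<in>Pow R. \<Sum>j\<in>{1..n} - R. \<Sum>y\<in>PiE R (\<lambda>_. UNIV). \<Sum>\<omega>\<in>(UNIV::'a set).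
      \<bar>Dt n \<gamma> R T y \<omega> j\<bar>)"
    unfolding FF_def by (rule sum.swap)
  also have "\<dots> = (\<Sum>T\<in>Pow R. \<Sum>y\<in>PiE R (\<lambda>_. UNIV). \<Sum>j\<in>{1..n} - R. \<Sum>\<omega>\<in>(UNIV::'a set).
      \<bar>Dt n \<gamma> R T y \<omega> j\<bar>)"
    by (rule sum.cong[OF refl], rule sum.swap)
  also have "\<dots> = (\<Sum>T\<in>Pow R. \<Sum>y\<in>PiE R (\<lambda>_. UNIV). \<Sum>\<omega>\<in>(UNIV::'a set).
      \<Sum>j\<in>{1..n} - R. \<bar>Dt n \<gamma> R T y \<omega> j\<bar>)"
    by (rule sum.cong[OF refl], rule sum.cong[OF refl], rule sum.swap)
  also have "\<dots> \<le> (\<Sum>T\<in>Pow R. \<Sum>y\<in>PiE R (\<lambda>_. UNIV::'a set). \<Sum>\<omega>\<in>(UNIV::'a set). 2 * cut_val n \<gamma>)"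
  proof (rule sum_mono, rule sum_mono, rule sum_mono)
    fix T y \<omega> show "(\<Sum>j\<in>{1..n} - R. \<bar>Dt n \<gamma> R T y \<omega> j\<bar>) \<le> 2 * cut_val n \<gamma>"
      by (rule L1) auto
  qed
  also have "\<dots> = 2 ^ card R * real (card (UNIV::'a set)) ^ card R
          * real (card (UNIV::'a set)) * (2 * cut_val n \<gamma>)"
    using fR by (simp add: card_Pow card_PiE)
  finally show ?thesis .
qed

lemma reindex_J:
  assumes k: "k \<ge> 1"
  shows "(\<Sum>J\<in>{J. J \<subseteq> {1..n} \<and> card J = k}. \<Sum>j\<in>J. FF (J - {j}) j)
      = (\<Sum>R\<in>{R. R \<subseteq> {1..n} \<and> card R = k - 1}. \<Sum>j\<in>{1..n} - R. FF R j)"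
proof -
  let ?K = "{J. J \<subseteq> {1..n} \<and> card J = k}"
  let ?K' = "{R. R \<subseteq> {1..n} \<and> card R = k - 1}"
  have fK: "finite ?K" by (rule finite_subset[of _ "Pow {1..n}"]) auto
  have fK': "finite ?K'" by (rule finite_subset[of _ "Pow {1..n}"]) auto
  have bij: "bij_betw (\<lambda>(R, j). (insert j R, j)) (Sigma ?K' (\<lambda>R. {1..n} - R)) (Sigma ?K (\<lambda>J. J))"
  proof (rule bij_betw_byWitness[where f' = "\<lambda>(J, j). (J - {j}, j)"])
    show "\<forall>a\<in>Sigma ?K' (\<lambda>R. {1..n} - R). (\<lambda>(J, j). (J - {j}, j)) ((\<lambda>(R, j). (insert j R, j)) a) = a"
      by auto
    show "\<forall>a\<in>Sigma ?K (\<lambda>J. J). (\<lambda>(R, j). (insert j R, j)) ((\<lambda>(J, j). (J - {j}, j)) a) = a"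
      by auto
    show "(\<lambda>(R, j). (insert j R, j)) ` Sigma ?K' (\<lambda>R. {1..n} - R) \<subseteq> Sigma ?K (\<lambda>J. J)"
    proof
      fix z assume "z \<in> (\<lambda>(R, j). (insert j R, j)) ` Sigma ?K' (\<lambda>R. {1..n} - R)"
      then obtain R j where z: "z = (insert j R, j)" and R: "R \<subseteq> {1..n}" "card R = k - 1"
        and j: "j \<in> {1..n}" "j \<notin> R" by auto
      have "finite R" using R(1) finite_subset by blast
      then have "card (insert j R) = k" using R(2) j(2) k by simp
      then show "z \<in> Sigma ?K (\<lambda>J. J)" using z R j by auto
    qed
    show "(\<lambda>(J, j). (J - {j}, j)) ` Sigma ?K (\<lambda>J. J) \<subseteq> Sigma ?K' (\<lambda>R. {1..n} - R)"
    proof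
      fix z assume "z \<in> (\<lambda>(J, j). (J - {j}, j)) ` Sigma ?K (\<lambda>J. J)"
      then obtain J j where z: "z = (J - {j}, j)" and J: "J \<subseteq> {1..n}" "card J = k"
        and j: "j \<in> J" by auto
      have "finite J" using J(1) finite_subset by blast
      then have "card (J - {j}) = k - 1" using J(2) j by simp
      then show "z \<in> Sigma ?K' (\<lambda>R. {1..n} - R)" using z J j by auto
    qed
  qed
  have "(\<Sum>J\<in>?K. \<Sum>j\<in>J. FF (J - {j}) j) = (\<Sum>(J, j)\<in>Sigma ?K (\<lambda>J. J). FF (J - {j}) j)"
    by (rule sum.Sigma) (use fK in \<open>auto intro: finite_subset\<close>)
  also have "\<dots> = (\<Sum>(R, j)\<in>Sigma ?K' (\<lambda>R. {1..n} - R). FF (insert j R - {j}) j)"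
    by (subst sum.reindex_bij_betw[OF bij, symmetric]) (simp add: case_prod_beta)
  also have "\<dots> = (\<Sum>(R, j)\<in>Sigma ?K' (\<lambda>R. {1..n} - R). FF R j)"
    by (intro sum.cong refl) auto
  also have "\<dots> = (\<Sum>R\<in>?K'. \<Sum>j\<in>{1..n} - R. FF R j)"
    by (rule sum.Sigma[symmetric]) (use fK' in auto)
  finally show ?thesis .
qed

lemma part2_bound:
  assumes k: "k \<ge> 1"
  shows "(\<Sum>J\<in>{J. J \<subseteq> {1..n} \<and> card J = k}. tv_marg n \<mu> J)
     \<le> 2 ^ k * real (card (UNIV::'a set)) ^ k * real n ^ (k - 1) * cut_val n \<gamma>"
proof -
  let ?K = "{J. J \<subseteq> {1..n} \<and> card J = k}"
  let ?K' = "{R. R \<subseteq> {1..n} \<and> card R = k - 1}"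
  let ?q = "real (card (UNIV::'a set))"
  let ?c = "cut_val n \<gamma>"
  have c0: "0 \<le> ?c" by (rule cut_val_nonneg)
  have "2 * (\<Sum>J\<in>?K. tv_marg n \<mu> J) = (\<Sum>J\<in>?K. 2 * tv_marg n \<mu> J)"
    by (simp add: sum_distrib_left)
  also have "\<dots> \<le> (\<Sum>J\<in>?K. \<Sum>j\<in>J. FF (J - {j}) j)"
    unfolding FF_def by (intro sum_mono tv_bound_J) auto
  also have "\<dots> = (\<Sum>R\<in>?K'. \<Sum>j\<in>{1..n} - R. FF R j)"
    by (rule reindex_J[OF k])
  also have "\<dots> \<le> (\<Sum>R\<in>?K'. 2 ^ (k - 1) * ?q ^ (k - 1) * ?q * (2 * ?c))"
  proof (rule sum_mono)
    fix R assume "R \<in> ?K'"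
    then show "(\<Sum>j\<in>{1..n} - R. FF R j) \<le> 2 ^ (k - 1) * ?q ^ (k - 1) * ?q * (2 * ?c)"
      using FF_sum[of R] by auto
  qed
  also have "\<dots> = real (card ?K') * (2 ^ (k - 1) * ?q ^ (k - 1) * ?q * (2 * ?c))"
    by simp
  also have "\<dots> = real (card ?K') * (2 ^ k * ?q ^ k * ?c)"
  proof -
    have "2 ^ (k - 1) * ?q ^ (k - 1) * ?q * (2 * ?c) = (2 ^ (k-1) * 2) * (?q ^ (k - 1) * ?q) * ?c"
      by (simp add: algebra_simps)
    also have "\<dots> = 2 ^ k * ?q ^ k * ?c"
      using power_minus_mult[of k "2::real"] power_minus_mult[of k ?q] k by simp
    finally show ?thesis by simp
  qed
  also have "\<dots> \<le> real n ^ (k - 1) * (2 ^ k * ?q ^ k * ?c)"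
  proof (rule mult_right_mono)
    have "card ?K' = n choose (k - 1)" using n_subsets[of "{1..n}" "k - 1"] by simp
    moreover have "n choose (k - 1) \<le> n ^ (k - 1)"
    proof (cases "k - 1 \<le> n")
      case True then show ?thesis by (rule binomial_le_pow)
    next
      case False then show ?thesis by (simp add: binomial_eq_0)
    qed
    ultimately have "card ?K' \<le> n ^ (k - 1)" by simp
    then show "real (card ?K') \<le> real n ^ (k - 1)" by (metis of_nat_le_iff of_nat_power)
    show "0 \<le> 2 ^ k * ?q ^ k * ?c" using c0 by simp
  qed
  finally have h: "2 * (\<Sum>J\<in>?K. tv_marg n \<mu> J) \<le> real n ^ (k - 1) * (2 ^ k * ?q ^ k * ?c)" .
  have e: "real n ^ (k - 1) * (2 ^ k * ?q ^ k * ?c) = 2 ^ k * ?q ^ k * real n ^ (k - 1) * ?c"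
    by (simp add: algebra_simps)
  have "0 \<le> 2 ^ k * ?q ^ k * real n ^ (k - 1) * ?c" using c0 by simp
  then show ?thesis using h e by linarith
qed

end

theorem proposition2p5:
  assumes "card (UNIV :: 'a::finite set) \<ge> 2"
  shows "\<forall>\<epsilon>::real. \<forall>k::nat. 0 < \<epsilon> \<and> \<epsilon> < 1/2 \<and> k \<ge> 2 \<longrightarrow>
    (\<exists>n0::nat. n0 > 0 \<and> (\<forall>n > n0. \<forall>\<mu> :: (nat \<Rightarrow> 'a) \<Rightarrow> real. is_prob n \<mu> \<longrightarrow>
       (eps_symmetric n ((\<epsilon>/9)^3) \<mu> \<longrightarrow> cut_dist n \<mu> (prod_marg n \<mu>) < \<epsilon>) \<and>
       (cut_dist n \<mu> (prod_marg n \<mu>) < \<epsilon>^4 / (128 * real (card (UNIV :: 'a set)))^(4*k) \<longrightarrow>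
          (\<Sum>I\<in>{I. I \<subseteq> {1..n} \<and> card I = k}. tv_marg n \<mu> I) < \<epsilon> * (real n)^k)))"
proof (intro allI impI)
  fix \<epsilon> :: real and k :: nat
  assume h: "0 < \<epsilon> \<and> \<epsilon> < 1/2 \<and> k \<ge> 2"
  then have e0: "0 < \<epsilon>" and e1: "\<epsilon> < 1/2" and k2: "k \<ge> 2" by auto
  let ?q = "real (card (UNIV :: 'a set))"
  have q2: "?q \<ge> 2" using assms by simp
  define n0 where "n0 = nat \<lceil>4 / \<epsilon>^2\<rceil> + 1"
  show "\<exists>n0::nat. n0 > 0 \<and> (\<forall>n > n0. \<forall>\<mu> :: (nat \<Rightarrow> 'a) \<Rightarrow> real. is_prob n \<mu> \<longrightarrow>
       (eps_symmetric n ((\<epsilon>/9)^3) \<mu> \<longrightarrow> cut_dist n \<mu> (prod_marg n \<mu>) < \<epsilon>) \<and>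
       (cut_dist n \<mu> (prod_marg n \<mu>) < \<epsilon>^4 / (128 * ?q)^(4*k) \<longrightarrow>
          (\<Sum>I\<in>{I. I \<subseteq> {1..n} \<and> card I = k}. tv_marg n \<mu> I) < \<epsilon> * (real n)^k))"
  proof (rule exI[of _ n0], intro conjI allI impI)
    show "0 < n0" by (simp add: n0_def)
    fix n :: nat and \<mu> :: "(nat \<Rightarrow> 'a) \<Rightarrow> real"
    assume n: "n > n0" and P: "is_prob n \<mu>"
    have npos: "real n > 0" using n by (simp add: n0_def)
    have nbig: "4 / \<epsilon>^2 < real n"
    proof -
      have "4 / \<epsilon>^2 \<le> real (nat \<lceil>4 / \<epsilon>^2\<rceil>)" by (rule real_nat_ceiling_ge)
      moreover have "real (nat \<lceil>4 / \<epsilon>^2\<rceil>) < real n" using n unfolding n0_def by simp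
      ultimately show ?thesis by linarith
    qed
    show "cut_dist n \<mu> (prod_marg n \<mu>) < \<epsilon>" if es: "eps_symmetric n ((\<epsilon>/9)^3) \<mu>"
    proof -
      have SSlt: "SS n \<mu> < (\<epsilon>/9)^3 * (real n)^2"
        using es npos unfolding eps_symmetric_def SS_def[OF P] by (simp add: field_simps)
      have cv: "cut_val n (gam0 n \<mu>) \<le> sqrt (2 * real n + 2 * SS n \<mu>)" by (rule cut_gam0[OF P])
      have cd: "cut_dist n \<mu> (prod_marg n \<mu>) \<le> cut_val n (gam0 n \<mu>) / real n"
        by (rule cut_dist_le[OF gam0_coupling[OF P]])
      have a: "4 < \<epsilon>^2 * real n" using nbig e0 by (simp add: field_simps)
      have b: "2 * real n < \<epsilon>^2 * (real n)^2 / 2"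
      proof -
        have "\<epsilon>^2 * (real n)^2 / 2 - 2 * real n = real n * (\<epsilon>^2 * real n - 4) / 2"
          by (simp add: algebra_simps power2_eq_square)
        moreover have "0 < real n * (\<epsilon>^2 * real n - 4) / 2" using a npos by simp
        ultimately show ?thesis by linarith
      qed
      have c: "(\<epsilon>/9)^3 \<le> \<epsilon>^2 / 729"
      proof -
        have "\<epsilon>^3 \<le> \<epsilon>^2" using e0 e1 by (simp add: power_decreasing)
        then show ?thesis by (simp add: power_divide)
      qed
      have d: "SS n \<mu> < \<epsilon>^2 / 729 * (real n)^2"
        using SSlt mult_right_mono[OF c, of "(real n)^2"] by simp
      have e: "0 \<le> \<epsilon>^2 * (real n)^2" by simp
      have key: "2 * real n + 2 * SS n \<mu> < (\<epsilon> * real n)^2"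
        using b d e by (simp add: power_mult_distrib)
      have "sqrt (2 * real n + 2 * SS n \<mu>) < sqrt ((\<epsilon> * real n)^2)"
        using key by (rule real_sqrt_less_mono)
      also have "\<dots> = \<epsilon> * real n" using e0 npos by simp
      finally have "cut_val n (gam0 n \<mu>) < \<epsilon> * real n" using cv by linarith
      then have "cut_val n (gam0 n \<mu>) / real n < \<epsilon>" using npos by (simp add: pos_divide_less_eq)
      then show ?thesis using cd by linarith
    qed
    show "(\<Sum>I\<in>{I. I \<subseteq> {1..n} \<and> card I = k}. tv_marg n \<mu> I) < \<epsilon> * (real n)^k"
      if cdl: "cut_dist n \<mu> (prod_marg n \<mu>) < \<epsilon>^4 / (128 * ?q)^(4*k)"
    proof -
      let ?\<eta> = "\<epsilon>^4 / (128 * ?q)^(4*k)"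
      obtain \<gamma> where G: "\<gamma> \<in> couplings n \<mu> (prod_marg n \<mu>)" and cv: "cut_val n \<gamma> < ?\<eta> * real n"
        using cut_dist_lt[OF couplings_ne[OF P] cdl] npos by auto
      have pb: "(\<Sum>J\<in>{J. J \<subseteq> {1..n} \<and> card J = k}. tv_marg n \<mu> J)
          \<le> 2 ^ k * ?q ^ k * real n ^ (k - 1) * cut_val n \<gamma>"
        by (rule part2_bound[OF P G]) (use k2 in simp)
      have Apos: "0 < 2 ^ k * ?q ^ k * real n ^ (k - 1)" using q2 npos by simp
      have lt: "2 ^ k * ?q ^ k * real n ^ (k - 1) * cut_val n \<gamma> < 2 ^ k * ?q ^ k * real n ^ (k - 1) * (?\<eta> * real n)"
        by (rule mult_strict_left_mono[OF cv Apos])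
      have eq: "2 ^ k * ?q ^ k * real n ^ (k - 1) * (?\<eta> * real n) = (2 ^ k * ?q ^ k * ?\<eta>) * real n ^ k"
      proof -
        have "real n ^ (k - 1) * real n = real n ^ k" using power_minus_mult[of k "real n"] k2 by simp
        then show ?thesis by (metis (no_types, lifting) mult.assoc mult.commute)
      qed
      have Ae: "2 ^ k * ?q ^ k * ?\<eta> \<le> \<epsilon>"
      proof -
        let ?D = "(128 * ?q)^(4*k)"
        have Dpos: "0 < ?D" using q2 by simp
        have "2 * ?q \<le> 128 * ?q" using q2 by simp
        also have "128 * ?q \<le> (128 * ?q)^4" using q2 by (intro self_le_power) auto
        finally have "2 * ?q \<le> (128 * ?q)^4" .
        then have "(2 * ?q)^k \<le> ((128 * ?q)^4)^k" using q2 by (intro power_mono) auto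
        then have le: "(2 * ?q)^k \<le> ?D" by (simp add: power_mult)
        have "2 ^ k * ?q ^ k * ?\<eta> = \<epsilon>^4 * ((2 * ?q)^k / ?D)"
          by (simp add: power_mult_distrib)
        also have "\<dots> \<le> \<epsilon>^4 * 1"
          using le Dpos by (intro mult_left_mono) auto
        also have "\<dots> \<le> \<epsilon>" using e0 e1 power_decreasing[of 1 4 \<epsilon>] by simp
        finally show ?thesis .
      qed
      have "(2 ^ k * ?q ^ k * ?\<eta>) * real n ^ k \<le> \<epsilon> * real n ^ k"
        using Ae by (rule mult_right_mono) simp
      then show ?thesis using pb lt eq by linarith
    qed
  qed
qed

end
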